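(* For all $1\leq r<s\leq n$, $$x_r^{-1}\sum_{T\in \mathcal P_{n}^{(r)}}t^{\mathrm{eld}(T)}\prod_{i=1}^{n}x_i^{\mathrm{young}_T(i)}=x_s^{-1}\sum_{T\in \mathcal P_{n}^{(s)}}t^{\mathrm{eld}(T)}\prod_{i=1}^{n}x_i^{\mathrm{young}_T(i)}.$$
   Context: All trees are rooted trees whose vertices are labeled by distinct positive integers. A vertex $j$ is a descendant of $i$ if the path from the root to $j$ passes through $i$ (every vertex is a descendant of itself); $\beta_T(i)$ is the smallest descendant of $i$. A child of $i$ is a descendant joined to $i$ by an edge; children of the same vertex are brothers. A plane tree is a rooted tree in which the children of each vertex are linearly ordered (left to right). In a plane tree $T$, a vertex $j$ is elder if it has a brother $k$ to its right with $\beta_T(k)<\beta_T(j)$. $\mathrm{eld}_T(v)$ is the number of elder children of $v$, $\mathrm{eld}(T)$ the total number of elder vertices, $\deg_T(v)$ the number of children of $v$, and $\mathrm{young}_T(v)=\deg_T(v)-\mathrm{eld}_T(v)$. $\mathcal P_n^{(r)}$ is the set of plane trees on $[n]=\{1,\dots,n\}$ with root $r$. The identity is in the field of rational functions in $x_1,\dots,x_n,t$. *)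

theory Defs
  imports Main
begin

text \<open>A plane tree on vertex set [n] = {1..n} is encoded by its children-list map
  ch :: nat => nat list: ch v is the left-to-right list of children of v
  (empty for leaves and for labels outside [n]).\<close>

definition child_rel :: "(nat \<Rightarrow> nat list) \<Rightarrow> (nat \<times> nat) set" where
  "child_rel ch = {(v, c). c \<in> set (ch v)}"

definition is_plane_tree :: "nat \<Rightarrow> nat \<Rightarrow> (nat \<Rightarrow> nat list) \<Rightarrow> bool" where
  "is_plane_tree n r ch \<longleftrightarrow>
     r \<in> {1..n} \<and>
     (\<forall>v. v \<notin> {1..n} \<longrightarrow> ch v = []) \<and>
     (\<forall>v. distinct (ch v) \<and> set (ch v) \<subseteq> {1..n}) \<and>
     (\<forall>v. r \<notin> set (ch v)) \<and>
     (\<forall>c\<in>{1..n} - {r}. \<exists>!v. c \<in> set (ch v)) \<and>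
     (\<forall>v\<in>{1..n}. (r, v) \<in> (child_rel ch)\<^sup>*)"

definition plane_trees :: "nat \<Rightarrow> nat \<Rightarrow> (nat \<Rightarrow> nat list) set" where
  "plane_trees n r = {ch. is_plane_tree n r ch}"

definition descendants :: "(nat \<Rightarrow> nat list) \<Rightarrow> nat \<Rightarrow> nat set" where
  "descendants ch i = {j. (i, j) \<in> (child_rel ch)\<^sup>*}"

definition beta :: "(nat \<Rightarrow> nat list) \<Rightarrow> nat \<Rightarrow> nat" where
  "beta ch i = Min (descendants ch i)"

definition eld_v :: "(nat \<Rightarrow> nat list) \<Rightarrow> nat \<Rightarrow> nat" where
  "eld_v ch v = card {k. k < length (ch v) \<and>
      (\<exists>l. k < l \<and> l < length (ch v) \<and> beta ch (ch v ! l) < beta ch (ch v ! k))}"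

definition deg_v :: "(nat \<Rightarrow> nat list) \<Rightarrow> nat \<Rightarrow> nat" where
  "deg_v ch v = length (ch v)"

definition young_v :: "(nat \<Rightarrow> nat list) \<Rightarrow> nat \<Rightarrow> nat" where
  "young_v ch v = deg_v ch v - eld_v ch v"

definition eld_total :: "nat \<Rightarrow> (nat \<Rightarrow> nat list) \<Rightarrow> nat" where
  "eld_total n ch = (\<Sum>v\<in>{1..n}. eld_v ch v)"

end

theory Submission
  imports Defs "HOL-Combinatorics.Multiset_Permutations"
begin
definition RF :: "'a::field \<Rightarrow> 'a \<Rightarrow> nat \<Rightarrow> 'a" where
  "RF t y n = (\<Prod>j<n. y + of_nat j * t)"

lemma RF_0[simp]: "RF t y 0 = 1" by (simp add: RF_def)

lemma RF_Suc: "RF t y (Suc n) = RF t y n * (y + of_nat n * t)"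
  by (simp add: RF_def)

lemma RF_Suc_shift: "RF t y (Suc n) = y * RF t (y + t) n"
  unfolding RF_def prod.lessThan_Suc_shift by (simp add: algebra_simps)

definition eldL :: "(nat \<Rightarrow> nat) \<Rightarrow> nat list \<Rightarrow> nat" where
  "eldL \<beta> L = card {k. k < length L \<and>
      (\<exists>l. k < l \<and> l < length L \<and> \<beta> (L ! l) < \<beta> (L ! k))}"

lemma eldL_le: "eldL \<beta> L \<le> length L"
proof -
  have "{k. k < length L \<and> (\<exists>l. k < l \<and> l < length L \<and> \<beta> (L ! l) < \<beta> (L ! k))} \<subseteq> {..<length L}"
    by auto
  from card_mono[OF _ this] show ?thesis unfolding eldL_def by simp
qed

lemma eldL_cong: "(\<And>y. y \<in> set L \<Longrightarrow> \<beta>1 y = \<beta>2 y) \<Longrightarrow> eldL \<beta>1 L = eldL \<beta>2 L"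
  unfolding eldL_def by (rule arg_cong[where f=card]) (auto simp: nth_mem)

lemma eldL_Cons: "eldL \<beta> (x # L) = eldL \<beta> L + (if \<exists>y\<in>set L. \<beta> y < \<beta> x then 1 else 0)"
proof -
  let ?S = "\<lambda>L. {k. k < length L \<and> (\<exists>l. k < l \<and> l < length L \<and> \<beta> (L ! l) < \<beta> (L ! k))}"
  have suc: "Suc ` ?S L = {k\<in>?S (x#L). k \<noteq> 0}"
  proof (rule set_eqI, rule iffI)
    fix k assume "k \<in> Suc ` ?S L"
    then obtain k' l where "k = Suc k'" "k' < length L" "k' < l" "l < length L" "\<beta> (L ! l) < \<beta> (L ! k')"
      by auto
    then show "k \<in> {k\<in>?S (x#L). k \<noteq> 0}"
      by (auto intro!: exI[of _ "Suc l"])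
  next
    fix k assume "k \<in> {k\<in>?S (x#L). k \<noteq> 0}"
    then obtain l where k: "k \<noteq> 0" "k < Suc (length L)" "k < l" "l < Suc (length L)" "\<beta> ((x#L) ! l) < \<beta> ((x#L) ! k)"
      by auto
    then obtain k' l' where "k = Suc k'" "l = Suc l'" by (metis gr0_implies_Suc not_less0 gr0I)
    with k show "k \<in> Suc ` ?S L" by (auto intro!: image_eqI[of _ _ k'])
  qed
  have zero: "0 \<in> ?S (x#L) \<longleftrightarrow> (\<exists>y\<in>set L. \<beta> y < \<beta> x)"
  proof
    assume "0 \<in> ?S (x#L)"
    then obtain l where "0 < l" "l < Suc (length L)" "\<beta> ((x#L) ! l) < \<beta> x" by auto
    then obtain l' where "l = Suc l'" "l' < length L" "\<beta> (L ! l') < \<beta> x" by (metis Suc_less_eq gr0_implies_Suc nth_Cons_Suc)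
    then show "\<exists>y\<in>set L. \<beta> y < \<beta> x" by (metis nth_mem)
  next
    assume "\<exists>y\<in>set L. \<beta> y < \<beta> x"
    then obtain l' where "l' < length L" "\<beta> (L ! l') < \<beta> x" by (metis in_set_conv_nth)
    then show "0 \<in> ?S (x#L)" by (auto intro!: exI[of _ "Suc l'"])
  qed
  have split: "?S (x#L) = {k\<in>?S (x#L). k \<noteq> 0} \<union> (if \<exists>y\<in>set L. \<beta> y < \<beta> x then {0} else {})"
    using zero by auto
  have fin: "finite (?S (x#L))" by simp
  have "card (?S (x#L)) = card {k\<in>?S (x#L). k \<noteq> 0} + card (if \<exists>y\<in>set L. \<beta> y < \<beta> x then {0::nat} else {})"
    by (subst split, rule card_Un_disjoint) auto
  also have "card {k\<in>?S (x#L). k \<noteq> 0} = card (?S L)"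
    unfolding suc[symmetric] by (rule card_image) simp
  finally show ?thesis unfolding eldL_def by auto
qed

definition wl :: "'a::field \<Rightarrow> 'a \<Rightarrow> (nat \<Rightarrow> nat) \<Rightarrow> nat list \<Rightarrow> 'a" where
  "wl t a \<beta> L = a ^ (length L - eldL \<beta> L) * t ^ eldL \<beta> L"

lemma wl_Cons: "wl t a \<beta> (x # L) = wl t a \<beta> L * (if \<exists>y\<in>set L. \<beta> y < \<beta> x then t else a)"
  using eldL_le[of \<beta> L] unfolding wl_def eldL_Cons
  by (auto simp: Suc_diff_le)

lemma sum_perms:
  assumes "finite C" "inj_on \<beta> C"
  shows "(\<Sum>L\<in>permutations_of_set C. wl t a \<beta> L) = RF t a (card C)"
  using assms
proof (induction "card C" arbitrary: C)
  case 0
  then have "C = {}" by simp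
  then show ?case by (simp add: wl_def eldL_def)
next
  case (Suc n)
  then have ne: "C \<noteq> {}" by auto
  have IH: "\<And>x. x \<in> C \<Longrightarrow> (\<Sum>L\<in>permutations_of_set (C - {x}). wl t a \<beta> L) = RF t a n"
  proof -
    fix x assume x: "x \<in> C"
    have "card (C - {x}) = n" using Suc.hyps(2) Suc.prems x by simp
    then show "(\<Sum>L\<in>permutations_of_set (C - {x}). wl t a \<beta> L) = RF t a n"
      using Suc.hyps(1)[of "C - {x}"] Suc.prems by (simp add: inj_on_diff)
  qed
  have "(\<Sum>L\<in>permutations_of_set C. wl t a \<beta> L)
      = (\<Sum>x\<in>C. \<Sum>L\<in>(\<lambda>xs. x # xs) ` permutations_of_set (C - {x}). wl t a \<beta> L)"
    unfolding permutations_of_set_nonempty[OF ne]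
    by (rule sum.UNION_disjoint) (auto simp: Suc.prems)
  also have "\<dots> = (\<Sum>x\<in>C. \<Sum>L\<in>permutations_of_set (C - {x}). wl t a \<beta> (x # L))"
    by (rule sum.cong[OF refl], subst sum.reindex) auto
  also have "\<dots> = (\<Sum>x\<in>C. \<Sum>L\<in>permutations_of_set (C - {x}). wl t a \<beta> L * (if \<exists>y\<in>C - {x}. \<beta> y < \<beta> x then t else a))"
    by (rule sum.cong[OF refl], rule sum.cong[OF refl]) (auto simp: wl_Cons permutations_of_set_def)
  also have "\<dots> = (\<Sum>x\<in>C. RF t a n * (if \<exists>y\<in>C - {x}. \<beta> y < \<beta> x then t else a))"
    by (rule sum.cong[OF refl]) (simp add: sum_distrib_right[symmetric] IH)
  also have "\<dots> = RF t a n * (\<Sum>x\<in>C. (if \<exists>y\<in>C - {x}. \<beta> y < \<beta> x then t else a))"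
    by (simp add: sum_distrib_left)
  also have "(\<Sum>x\<in>C. (if \<exists>y\<in>C - {x}. \<beta> y < \<beta> x then t else a)) = a + of_nat n * t"
  proof -
    have "Min (\<beta> ` C) \<in> \<beta> ` C" using Suc.prems ne by (intro Min_in) auto
    then obtain m where m1: "m \<in> C" "\<beta> m = Min (\<beta> ` C)" by auto
    have m: "m \<in> C" "\<And>y. y \<in> C \<Longrightarrow> \<beta> m \<le> \<beta> y"
      using m1 Suc.prems by auto
    have "(\<Sum>x\<in>C. (if \<exists>y\<in>C - {x}. \<beta> y < \<beta> x then t else a))
        = (if \<exists>y\<in>C - {m}. \<beta> y < \<beta> m then t else a) + (\<Sum>x\<in>C - {m}. (if \<exists>y\<in>C - {x}. \<beta> y < \<beta> x then t else a))"
      using m Suc.prems by (simp add: sum.remove)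
    also have "(if \<exists>y\<in>C - {m}. \<beta> y < \<beta> m then t else a) = a"
      using m by (auto simp: not_less[symmetric])
    also have "(\<Sum>x\<in>C - {m}. (if \<exists>y\<in>C - {x}. \<beta> y < \<beta> x then t else a)) = (\<Sum>x\<in>C - {m}. t)"
    proof (rule sum.cong[OF refl])
      fix x assume x: "x \<in> C - {m}"
      then have "\<beta> m \<noteq> \<beta> x" using m Suc.prems(2) by (metis DiffE inj_on_contraD singletonI)
      then have "\<beta> m < \<beta> x" using m x by (simp add: order_le_neq_trans)
      then show "(if \<exists>y\<in>C - {x}. \<beta> y < \<beta> x then t else a) = t" using m x by auto
    qed
    also have "(\<Sum>x\<in>C - {m}. t) = of_nat n * t"
      using m Suc.prems by (simp flip: Suc.hyps(2))
    finally show ?thesis .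
  qed
  finally show ?case by (simp add: RF_Suc flip: Suc.hyps(2))
qed

lemma vandermonde_set:
  fixes t a b :: "'a::field"
  assumes "finite M"
  shows "(\<Sum>C\<in>Pow M. RF t a (card C) * RF t b (card (M - C))) = RF t (a + b) (card M)"
  using assms
proof (induction M rule: finite_induct)
  case empty
  then show ?case by simp
next
  case (insert u M)
  let ?g = "\<lambda>C. RF t a (card C) * RF t b (card (M - C))"
  have disj: "Pow M \<inter> insert u ` Pow M = {}" using insert by auto
  have inj: "inj_on (insert u) (Pow M)"
    using insert.hyps(2) by (auto simp: inj_on_def)
  have "(\<Sum>C\<in>Pow (insert u M). RF t a (card C) * RF t b (card (insert u M - C)))
      = (\<Sum>C\<in>Pow M. RF t a (card C) * RF t b (card (insert u M - C)))
        + (\<Sum>C\<in>insert u ` Pow M. RF t a (card C) * RF t b (card (insert u M - C)))"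
    unfolding Pow_insert using insert.hyps disj by (intro sum.union_disjoint) auto
  also have "(\<Sum>C\<in>insert u ` Pow M. RF t a (card C) * RF t b (card (insert u M - C)))
      = (\<Sum>C\<in>Pow M. RF t a (card (insert u C)) * RF t b (card (insert u M - insert u C)))"
    by (subst sum.reindex[OF inj]) simp
  also have "\<dots> = (\<Sum>C\<in>Pow M. ?g C * (a + of_nat (card C) * t))"
  proof (rule sum.cong[OF refl])
    fix C assume C: "C \<in> Pow M"
    then have "finite C" "u \<notin> C" using insert.hyps finite_subset by auto
    moreover have "insert u M - insert u C = M - C" using insert.hyps C by auto
    ultimately show "RF t a (card (insert u C)) * RF t b (card (insert u M - insert u C)) = ?g C * (a + of_nat (card C) * t)"
      by (simp add: RF_Suc)
  qed
  also have "(\<Sum>C\<in>Pow M. RF t a (card C) * RF t b (card (insert u M - C)))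
      = (\<Sum>C\<in>Pow M. ?g C * (b + of_nat (card (M - C)) * t))"
  proof (rule sum.cong[OF refl])
    fix C assume C: "C \<in> Pow M"
    have "insert u M - C = insert u (M - C)" using insert.hyps C by auto
    moreover have "u \<notin> M - C" "finite (M - C)" using insert.hyps by auto
    ultimately show "RF t a (card C) * RF t b (card (insert u M - C)) = ?g C * (b + of_nat (card (M - C)) * t)"
      by (simp add: RF_Suc)
  qed
  also have "(\<Sum>C\<in>Pow M. ?g C * (b + of_nat (card (M - C)) * t)) + (\<Sum>C\<in>Pow M. ?g C * (a + of_nat (card C) * t))
      = (\<Sum>C\<in>Pow M. ?g C * ((a + b) + of_nat (card M) * t))"
  proof -
    have "\<And>C. C \<in> Pow M \<Longrightarrow> card C + card (M - C) = card M"
      using insert.hyps by (metis Pow_iff card_Diff_subset finite_subset le_add_diff_inverse card_mono)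
    then have "\<And>C. C \<in> Pow M \<Longrightarrow> ?g C * (b + of_nat (card (M - C)) * t) + ?g C * (a + of_nat (card C) * t)
        = ?g C * ((a + b) + of_nat (card M) * t)"
    proof -
      fix C assume "C \<in> Pow M"
      with \<open>\<And>C. C \<in> Pow M \<Longrightarrow> card C + card (M - C) = card M\<close>
      have h: "(of_nat (card M)::'a) = of_nat (card C) + of_nat (card (M - C))"
        by (metis of_nat_add)
      show "?g C * (b + of_nat (card (M - C)) * t) + ?g C * (a + of_nat (card C) * t)
        = ?g C * ((a + b) + of_nat (card M) * t)" by (simp add: h algebra_simps)
    qed
    then show ?thesis by (simp add: sum.distrib[symmetric])
  qed
  also have "\<dots> = RF t (a + b) (card (insert u M))"
    using insert by (simp add: sum_distrib_right[symmetric] RF_Suc)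
  finally show ?case .
qed

lemma vandermonde_set2:
  assumes "finite M"
  shows "(\<Sum>C\<in>Pow M. RF t a (card C) * ((\<Sum>u\<in>M - C. x u) * RF t (b + t) (card (M - C) - 1)))
       = (\<Sum>u\<in>M. x u) * RF t (a + b + t) (card M - 1)"
proof -
  have "(\<Sum>C\<in>Pow M. RF t a (card C) * ((\<Sum>u\<in>M - C. x u) * RF t (b + t) (card (M - C) - 1)))
      = (\<Sum>C\<in>Pow M. \<Sum>u\<in>M. if u \<notin> C then x u * (RF t a (card C) * RF t (b + t) (card (M - {u} - C))) else 0)"
  proof (rule sum.cong[OF refl])
    fix C assume C: "C \<in> Pow M"
    have "(\<Sum>u\<in>M - C. x u) * RF t (b + t) (card (M - C) - 1) * RF t a (card C)
        = (\<Sum>u\<in>M - C. x u * (RF t a (card C) * RF t (b + t) (card (M - {u} - C))))"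
      unfolding sum_distrib_right
    proof (rule sum.cong[OF refl])
      fix u assume u: "u \<in> M - C"
      have "M - {u} - C = (M - C) - {u}" by auto
      then have "card (M - {u} - C) = card (M - C) - 1" using u assms by simp
      then show "x u * RF t (b + t) (card (M - C) - 1) * RF t a (card C) = x u * (RF t a (card C) * RF t (b + t) (card (M - {u} - C)))"
        by simp
    qed
    also have "\<dots> = (\<Sum>u\<in>M. if u \<notin> C then x u * (RF t a (card C) * RF t (b + t) (card (M - {u} - C))) else 0)"
      using assms by (simp add: sum.inter_filter[symmetric] set_diff_eq)
    finally show "RF t a (card C) * ((\<Sum>u\<in>M - C. x u) * RF t (b + t) (card (M - C) - 1))
        = (\<Sum>u\<in>M. if u \<notin> C then x u * (RF t a (card C) * RF t (b + t) (card (M - {u} - C))) else 0)"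
      by (simp add: algebra_simps)
  qed
  also have "\<dots> = (\<Sum>u\<in>M. \<Sum>C\<in>Pow M. if u \<notin> C then x u * (RF t a (card C) * RF t (b + t) (card (M - {u} - C))) else 0)"
    by (rule sum.swap)
  also have "\<dots> = (\<Sum>u\<in>M. x u * (\<Sum>C\<in>Pow (M - {u}). RF t a (card C) * RF t (b + t) (card (M - {u} - C))))"
  proof (rule sum.cong[OF refl])
    fix u assume u: "u \<in> M"
    have e: "{C \<in> Pow M. u \<notin> C} = Pow (M - {u})" by auto
    have "(\<Sum>C\<in>Pow M. if u \<notin> C then x u * (RF t a (card C) * RF t (b + t) (card (M - {u} - C))) else 0)
        = (\<Sum>C\<in>{C \<in> Pow M. u \<notin> C}. x u * (RF t a (card C) * RF t (b + t) (card (M - {u} - C))))"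
      by (rule sum.inter_filter[symmetric]) (simp add: assms)
    then show "(\<Sum>C\<in>Pow M. if u \<notin> C then x u * (RF t a (card C) * RF t (b + t) (card (M - {u} - C))) else 0)
        = x u * (\<Sum>C\<in>Pow (M - {u}). RF t a (card C) * RF t (b + t) (card (M - {u} - C)))"
      unfolding e by (simp add: sum_distrib_left)
  qed
  also have "\<dots> = (\<Sum>u\<in>M. x u * RF t (a + (b + t)) (card M - 1))"
    using assms by (intro sum.cong[OF refl]) (simp add: vandermonde_set)
  finally show ?thesis by (simp add: sum_distrib_right add.assoc)
qed

definition Fc :: "(nat \<Rightarrow> 'a::field) \<Rightarrow> 'a \<Rightarrow> nat set \<Rightarrow> nat set \<Rightarrow> 'a" where
  "Fc x t V R = (if V \<subseteq> R then 1 else (\<Sum>v\<in>R. x v) * RF t (sum x V + t) (card (V - R) - 1))"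

lemma Fc_step:
  assumes "finite V" "R \<subseteq> V" "r \<in> R"
  shows "(\<Sum>C\<in>Pow (V - R). RF t (x r) (card C) * Fc x t (V - {r}) (R - {r} \<union> C)) = Fc x t V R"
proof -
  define M where "M = V - R"
  define b where "b = sum x (R - {r})"
  define Q where "Q = b + sum x M"
  have finM: "finite M" using assms M_def by simp
  have finR: "finite R" using assms finite_subset by blast
  have each: "Fc x t (V - {r}) (R - {r} \<union> C) = RF t Q (card (M - C)) - sum x (M - C) * RF t (Q + t) (card (M - C) - 1)"
    if C: "C \<subseteq> M" for C
  proof (cases "C = M")
    case True
    then show ?thesis using assms unfolding Fc_def M_def by auto
  next
    case False
    have finC: "finite C" using C finM finite_subset by blast
    have nsub: "\<not> (V - {r} \<subseteq> R - {r} \<union> C)" using False C assms unfolding M_def by auto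
    have diff: "V - {r} - (R - {r} \<union> C) = M - C" using assms C unfolding M_def by auto
    have sR: "sum x (R - {r} \<union> C) = b + sum x C"
      unfolding b_def using C finR finC M_def by (intro sum.union_disjoint) auto
    have sV: "sum x (V - {r}) = Q"
    proof -
      have "V - {r} = (R - {r}) \<union> M" using assms M_def by auto
      then show ?thesis unfolding Q_def b_def using finR finM M_def by (simp, subst sum.union_disjoint) auto
    qed
    have sM: "sum x M = sum x C + sum x (M - C)"
      using sum.subset_diff[OF C finM, of x] by (simp add: add.commute)
    obtain k where k: "card (M - C) = Suc k" using False C finM
      by (metis Diff_eq_empty_iff card_0_eq finite_Diff not0_implies_Suc subset_antisym)
    show ?thesis unfolding Fc_def using nsub diff sR sV k
      by (simp add: RF_Suc_shift Q_def sM algebra_simps)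
  qed
  have "(\<Sum>C\<in>Pow M. RF t (x r) (card C) * Fc x t (V - {r}) (R - {r} \<union> C))
      = (\<Sum>C\<in>Pow M. RF t (x r) (card C) * RF t Q (card (M - C)))
        - (\<Sum>C\<in>Pow M. RF t (x r) (card C) * (sum x (M - C) * RF t (Q + t) (card (M - C) - 1)))"
    by (simp add: each sum_subtractf[symmetric] algebra_simps)
  also have "\<dots> = RF t (x r + Q) (card M) - sum x M * RF t (x r + Q + t) (card M - 1)"
    by (simp only: vandermonde_set[OF finM] vandermonde_set2[OF finM])
  also have "\<dots> = Fc x t V R"
  proof (cases "M = {}")
    case True
    then show ?thesis using assms M_def by (simp add: Fc_def)
  next
    case False
    then obtain k where k: "card M = Suc k" using finM by (metis card_0_eq not0_implies_Suc)
    have sR: "sum x R = x r + b" unfolding b_def using assms finR by (simp add: sum.remove)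
    have sV: "sum x V = x r + Q"
    proof -
      have "sum x V = sum x R + sum x M"
        using sum.subset_diff[OF assms(2) assms(1), of x] M_def by (simp add: add.commute)
      then show ?thesis unfolding Q_def using sR by (simp add: algebra_simps)
    qed
    have "\<not> V \<subseteq> R" using False M_def by auto
    then show ?thesis unfolding Fc_def using k sR sV M_def[symmetric]
      by (simp add: RF_Suc_shift Q_def algebra_simps)
  qed
  finally show ?thesis unfolding M_def .
qed

definition pforest :: "nat set \<Rightarrow> nat set \<Rightarrow> (nat \<Rightarrow> nat list) \<Rightarrow> bool" where
  "pforest V R ch \<longleftrightarrow> R \<subseteq> V \<and> (\<forall>v. v \<notin> V \<longrightarrow> ch v = []) \<and>
     (\<forall>v. distinct (ch v) \<and> set (ch v) \<subseteq> V - R) \<and>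
     (\<forall>c\<in>V - R. \<exists>!v. c \<in> set (ch v)) \<and>
     (\<forall>v\<in>V. \<exists>q\<in>R. (q, v) \<in> (child_rel ch)\<^sup>*)"

lemma child_rel_iff[simp]: "(v, c) \<in> child_rel ch \<longleftrightarrow> c \<in> set (ch v)"
  by (simp add: child_rel_def)

lemma pf_sub: "pforest V R ch \<Longrightarrow> c \<in> set (ch v) \<Longrightarrow> c \<in> V \<and> c \<notin> R"
  unfolding pforest_def by blast

lemma pf_par: "pforest V R ch \<Longrightarrow> c \<in> set (ch v) \<Longrightarrow> c \<in> set (ch w) \<Longrightarrow> v = w"
  unfolding pforest_def by (metis Diff_iff subsetD)

lemma pf_ex:
  assumes "pforest V R ch" "c \<in> V - R"
  shows "\<exists>v. c \<in> set (ch v)"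
proof -
  from assms(1) have "\<forall>c\<in>V - R. \<exists>!v. c \<in> set (ch v)" by (simp add: pforest_def)
  with assms(2) show ?thesis by blast
qed

lemma root_unique:
  assumes pf: "pforest V R ch" and aj: "(a, j) \<in> (child_rel ch)\<^sup>*" and a: "a \<in> R"
  shows "(b, j) \<in> (child_rel ch)\<^sup>* \<Longrightarrow> b \<in> R \<Longrightarrow> a = b"
  using aj
proof (induction arbitrary: b rule: rtrancl_induct)
  case base
  from base(1) show ?case
  proof (cases rule: rtranclE)
    case base then show ?thesis by simp
  next
    case (step k)
    then show ?thesis using pf_sub[OF pf] a by auto
  qed
next
  case (step k j)
  have kj: "j \<in> set (ch k)" using step.hyps(2) by simp
  have bR: "b \<in> R" using step.prems(2) .
  note IH = step.IH
  from step.prems(1) show ?case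
  proof (cases rule: rtranclE)
    case base
    have "j \<notin> R" using pf_sub[OF pf kj] by blast
    then show ?thesis using base bR by simp
  next
    case (step k')
    then have "j \<in> set (ch k')" by simp
    then have "k' = k" using pf_par[OF pf _ kj] by blast
    then show ?thesis using IH[OF _ bR] step(1) by simp
  qed
qed

lemma reach_in_V:
  assumes pf: "pforest V R ch" and "(c, j) \<in> (child_rel ch)\<^sup>*" "c \<in> V"
  shows "j \<in> V"
  using assms(2,3) by (induction rule: rtrancl_induct) (auto dest: pf_sub[OF pf])

lemma desc_props:
  assumes pf: "pforest V R ch" and fin: "finite V" and c: "c \<in> V"
  shows "finite (descendants ch c)" "c \<in> descendants ch c" "beta ch c \<in> descendants ch c"
proof -
  have sub: "descendants ch c \<subseteq> V" unfolding descendants_def using reach_in_V[OF pf _ c] by auto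
  show f: "finite (descendants ch c)" using finite_subset[OF sub fin] .
  show m: "c \<in> descendants ch c" unfolding descendants_def by simp
  show "beta ch c \<in> descendants ch c" unfolding beta_def using f m by (intro Min_in) auto
qed

lemma beta_inj_roots:
  assumes pf: "pforest V R ch" and fin: "finite V"
  shows "inj_on (beta ch) R"
proof (rule inj_onI)
  fix a b assume a: "a \<in> R" and b: "b \<in> R" and e: "beta ch a = beta ch b"
  have "a \<in> V" "b \<in> V" using pf a b unfolding pforest_def by auto
  then have "(a, beta ch a) \<in> (child_rel ch)\<^sup>*" "(b, beta ch b) \<in> (child_rel ch)\<^sup>*"
    using desc_props(3)[OF pf fin] unfolding descendants_def by auto
  then have "(a, beta ch a) \<in> (child_rel ch)\<^sup>*" "(b, beta ch a) \<in> (child_rel ch)\<^sup>*"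
    using e by auto
  then show "a = b" using root_unique[OF pf _ a _ b] by blast
qed

lemma desc_same:
  assumes "\<forall>v. v \<noteq> r \<longrightarrow> ch1 v = ch2 v" "\<forall>v. r \<notin> set (ch1 v)" "c \<noteq> r"
    and "(c, j) \<in> (child_rel ch1)\<^sup>*"
  shows "(c, j) \<in> (child_rel ch2)\<^sup>* \<and> j \<noteq> r"
  using assms(4)
proof (induction rule: rtrancl_induct)
  case base then show ?case using assms(3) by simp
next
  case (step k j)
  then have "j \<in> set (ch2 k)" using assms(1) by auto
  then show ?case using step assms(2) by (auto intro: rtrancl_into_rtrancl)
qed

lemma beta_same:
  assumes "\<forall>v. v \<noteq> r \<longrightarrow> ch1 v = ch2 v" "\<forall>v. r \<notin> set (ch1 v)" "\<forall>v. r \<notin> set (ch2 v)" "c \<noteq> r"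
  shows "beta ch1 c = beta ch2 c"
proof -
  have "\<forall>v. v \<noteq> r \<longrightarrow> ch2 v = ch1 v" using assms(1) by simp
  then have "descendants ch1 c = descendants ch2 c"
    unfolding descendants_def using desc_same[OF assms(1,2,4)] desc_same[of r ch2 ch1, OF _ assms(3,4)]
    by blast
  then show ?thesis unfolding beta_def by simp
qed

lemma fwd:
  assumes pf: "pforest V R P" and r: "r \<in> R"
  shows "pforest (V - {r}) (R - {r} \<union> set (P r)) (P(r := []))"
proof -
  let ?P = "P(r := [])"
  let ?R = "R - {r} \<union> set (P r)"
  have a1: "?R \<subseteq> V - {r}" using pf r unfolding pforest_def by auto
  have a2: "\<forall>v. v \<notin> V - {r} \<longrightarrow> ?P v = []" using pf unfolding pforest_def by auto
  have a3: "\<forall>v. distinct (?P v) \<and> set (?P v) \<subseteq> (V - {r}) - ?R"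
  proof
    fix v show "distinct (?P v) \<and> set (?P v) \<subseteq> (V - {r}) - ?R"
    proof (cases "v = r")
      case True then show ?thesis by simp
    next
      case False
      have "c \<in> (V - {r}) - ?R" if c: "c \<in> set (P v)" for c
        using pf_sub[OF pf c] pf_par[OF pf c] False r by auto
      then show ?thesis using False pf unfolding pforest_def by auto
    qed
  qed
  have a4: "\<forall>c\<in>(V - {r}) - ?R. \<exists>!v. c \<in> set (?P v)"
  proof
    fix c assume c: "c \<in> (V - {r}) - ?R"
    then have "c \<in> V - R" by auto
    then obtain v where v: "c \<in> set (P v)" using pf_ex[OF pf] by blast
    have "v \<noteq> r" using v c by auto
    then have "c \<in> set (?P v)" using v by simp
    moreover have "w = v" if "c \<in> set (?P w)" for w
      using that pf_par[OF pf v] by (cases "w = r") auto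
    ultimately show "\<exists>!v. c \<in> set (?P v)" by blast
  qed
  have reach: "j = r \<or> (\<exists>q'\<in>?R. (q', j) \<in> (child_rel ?P)\<^sup>*)"
    if "(q, j) \<in> (child_rel P)\<^sup>*" "q \<in> R" for q j
    using that(1)
  proof (induction rule: rtrancl_induct)
    case base then show ?case using that(2) by auto
  next
    case (step k j)
    show ?case
    proof (cases "k = r")
      case True then show ?thesis using step(2) by auto
    next
      case False
      from step(3) False obtain q' where "q' \<in> ?R" "(q', k) \<in> (child_rel ?P)\<^sup>*" by blast
      moreover have "(k, j) \<in> child_rel ?P" using step(2) False by simp
      ultimately show ?thesis by (meson rtrancl_into_rtrancl)
    qed
  qed
  have a5: "\<forall>v\<in>V - {r}. \<exists>q\<in>?R. (q, v) \<in> (child_rel ?P)\<^sup>*"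
  proof
    fix v assume v: "v \<in> V - {r}"
    then obtain q where "q \<in> R" "(q, v) \<in> (child_rel P)\<^sup>*" using pf unfolding pforest_def by auto
    then show "\<exists>q\<in>?R. (q, v) \<in> (child_rel ?P)\<^sup>*" using reach v by blast
  qed
  show ?thesis unfolding pforest_def by (intro conjI a1 a2 a3 a4 a5)
qed

lemma bwd:
  assumes pf: "pforest (V - {r}) (R - {r} \<union> C) P" and r: "r \<in> R" and RV: "R \<subseteq> V"
    and C: "C \<subseteq> V - R" and L: "distinct L" "set L = C"
  shows "pforest V R (P(r := L))"
proof -
  let ?P = "P(r := L)"
  have Pr: "P r = []" using pf unfolding pforest_def by auto
  have a2: "\<forall>v. v \<notin> V \<longrightarrow> ?P v = []" using pf r RV unfolding pforest_def by auto
  have a3: "\<forall>v. distinct (?P v) \<and> set (?P v) \<subseteq> V - R"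
  proof
    fix v show "distinct (?P v) \<and> set (?P v) \<subseteq> V - R"
    proof (cases "v = r")
      case True then show ?thesis using L C by simp
    next
      case False
      have "distinct (P v)" using pf unfolding pforest_def by blast
      moreover have "c \<in> V - R" if "c \<in> set (P v)" for c
        using pf_sub[OF pf that] by blast
      ultimately show ?thesis using False by auto
    qed
  qed
  have a4: "\<forall>c\<in>V - R. \<exists>!v. c \<in> set (?P v)"
  proof
    fix c assume c: "c \<in> V - R"
    show "\<exists>!v. c \<in> set (?P v)"
    proof (cases "c \<in> C")
      case True
      have "w = r" if "c \<in> set (?P w)" for w
      proof (rule ccontr)
        assume "w \<noteq> r"
        then have "c \<in> set (P w)" using that by simp
        then have "c \<notin> R - {r} \<union> C" using pf_sub[OF pf] by blast
        with True show False by blast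
      qed
      moreover have "c \<in> set (?P r)" using True L by simp
      ultimately show ?thesis by (intro ex1I[of _ r]) blast+
    next
      case False
      then have "c \<in> (V - {r}) - (R - {r} \<union> C)" using c r by auto
      then obtain v where v: "c \<in> set (P v)" using pf_ex[OF pf] by blast
      have vr: "v \<noteq> r" using v Pr by auto
      have "w = v" if "c \<in> set (?P w)" for w
      proof (cases "w = r")
        case True then show ?thesis using that False L by simp
      next
        case False then show ?thesis using that pf_par[OF pf v] by simp
      qed
      moreover have "c \<in> set (?P v)" using v vr by simp
      ultimately show ?thesis by (intro ex1I[of _ v]) blast+
    qed
  qed
  have sub: "child_rel P \<subseteq> child_rel ?P" using Pr by (auto simp: child_rel_def)
  have a5: "\<forall>v\<in>V. \<exists>q\<in>R. (q, v) \<in> (child_rel ?P)\<^sup>*"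
  proof
    fix v assume v: "v \<in> V"
    show "\<exists>q\<in>R. (q, v) \<in> (child_rel ?P)\<^sup>*"
    proof (cases "v = r")
      case True then show ?thesis using r by auto
    next
      case False
      have "\<forall>v\<in>V - {r}. \<exists>q\<in>R - {r} \<union> C. (q, v) \<in> (child_rel P)\<^sup>*"
        using pf unfolding pforest_def by blast
      then obtain q where q: "q \<in> R - {r} \<union> C" "(q, v) \<in> (child_rel P)\<^sup>*"
        using v False by blast
      then have qv: "(q, v) \<in> (child_rel ?P)\<^sup>*" using rtrancl_mono[OF sub] by auto
      show ?thesis
      proof (cases "q \<in> C")
        case True
        then have "(r, q) \<in> child_rel ?P" using L by simp
        then show ?thesis using qv r by (meson converse_rtrancl_into_rtrancl)
      next
        case False then show ?thesis using q qv by auto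
      qed
    qed
  qed
  show ?thesis unfolding pforest_def by (intro conjI RV a2 a3 a4 a5)
qed

definition wt :: "(nat \<Rightarrow> 'a::field) \<Rightarrow> 'a \<Rightarrow> nat set \<Rightarrow> (nat \<Rightarrow> nat list) \<Rightarrow> 'a" where
  "wt x t V ch = (\<Prod>v\<in>V. wl t (x v) (beta ch) (ch v))"

definition FF :: "(nat \<Rightarrow> 'a::field) \<Rightarrow> 'a \<Rightarrow> nat set \<Rightarrow> nat set \<Rightarrow> 'a" where
  "FF x t V R = (\<Sum>ch\<in>{ch. pforest V R ch}. wt x t V ch)"

lemma wl_cong: "(\<And>y. y \<in> set L \<Longrightarrow> \<beta>1 y = \<beta>2 y) \<Longrightarrow> wl t a \<beta>1 L = wl t a \<beta>2 L"
  unfolding wl_def using eldL_cong[of L \<beta>1 \<beta>2] by simp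

lemma wt_step:
  assumes pf: "pforest (V - {r}) (R - {r} \<union> C) P" and r: "r \<in> R" and RV: "R \<subseteq> V"
    and C: "C \<subseteq> V - R" and L: "set L = C" and fin: "finite V"
  shows "wt x t V (P(r := L)) = wl t (x r) (beta P) L * wt x t (V - {r}) P"
proof -
  have nc2: "\<forall>v. r \<notin> set (P v)" using pf_sub[OF pf] by blast
  have nc1: "\<forall>v. r \<notin> set ((P(r := L)) v)" using nc2 L C r by auto
  have agree: "\<forall>v. v \<noteq> r \<longrightarrow> (P(r := L)) v = P v" by simp
  have bs: "\<And>c. c \<noteq> r \<Longrightarrow> beta (P(r := L)) c = beta P c"
    using beta_same[OF agree nc1 nc2] by blast
  have rV: "r \<in> V" using r RV by auto
  have "wt x t V (P(r := L)) = wl t (x r) (beta (P(r := L))) L * (\<Prod>v\<in>V - {r}. wl t (x v) (beta (P(r := L))) ((P(r := L)) v))"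
    unfolding wt_def using fin rV by (simp add: prod.remove)
  also have "wl t (x r) (beta (P(r := L))) L = wl t (x r) (beta P) L"
    using nc1 bs by (intro wl_cong) (metis fun_upd_same)
  also have "(\<Prod>v\<in>V - {r}. wl t (x v) (beta (P(r := L))) ((P(r := L)) v)) = wt x t (V - {r}) P"
    unfolding wt_def
  proof (rule prod.cong[OF refl])
    fix v assume "v \<in> V - {r}"
    then have "(P(r := L)) v = P v" by simp
    then show "wl t (x v) (beta (P(r := L))) ((P(r := L)) v) = wl t (x v) (beta P) (P v)"
      using nc2 bs by (metis wl_cong)
  qed
  finally show ?thesis .
qed

lemma finite_pforests:
  assumes fin: "finite V"
  shows "finite {ch. pforest V R ch}"
proof -
  let ?B = "{xs. set xs \<subseteq> V \<and> length xs \<le> card V}"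
  have fB: "finite ?B" using finite_lists_length_le[OF fin] .
  have "ch \<in> {f. \<forall>x. (x \<in> V \<longrightarrow> f x \<in> ?B) \<and> (x \<notin> V \<longrightarrow> f x = [])}"
    if pf: "pforest V R ch" for ch
  proof -
    have "\<forall>x. (x \<in> V \<longrightarrow> ch x \<in> ?B) \<and> (x \<notin> V \<longrightarrow> ch x = [])"
    proof (intro allI conjI impI)
      fix x assume "x \<in> V"
      have d: "distinct (ch x)" and s: "set (ch x) \<subseteq> V" using pf unfolding pforest_def by auto
      have "length (ch x) = card (set (ch x))" using distinct_card[OF d] by simp
      also have "\<dots> \<le> card V" using card_mono[OF fin s] .
      finally show "ch x \<in> ?B" using s by simp
    next
      fix x assume "x \<notin> V" then show "ch x = []" using pf unfolding pforest_def by auto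
    qed
    then show ?thesis by simp
  qed
  then have "{ch. pforest V R ch} \<subseteq> {f. \<forall>x. (x \<in> V \<longrightarrow> f x \<in> ?B) \<and> (x \<notin> V \<longrightarrow> f x = [])}"
    by blast
  then show ?thesis using finite_subset finite_set_of_finite_funs[OF fin fB] by blast
qed

lemma FF_Fc:
  assumes "finite V" "R \<subseteq> V"
  shows "FF x t V R = Fc x t V R"
  using assms
proof (induction "card V" arbitrary: V R rule: less_induct)
  case less
  show ?case
  proof (cases "R = {}")
    case True
    show ?thesis
    proof (cases "V = {}")
      case True
      have "{ch. pforest V R ch} = {\<lambda>_. []}"
        using True \<open>R = {}\<close> by (auto simp: pforest_def fun_eq_iff)
      then show ?thesis unfolding FF_def Fc_def wt_def using True \<open>R = {}\<close> by simp
    next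
      case False
      have e: "{ch. pforest V R ch} = {}"
        using False \<open>R = {}\<close> by (auto simp: pforest_def)
      show ?thesis unfolding FF_def Fc_def e using False \<open>R = {}\<close> by simp
    qed
  next
    case False
    then obtain r where r: "r \<in> R" by blast
    define M where "M = V - R"
    define D where "D = Sigma (Pow M) (\<lambda>C. {P. pforest (V - {r}) (R - {r} \<union> C) P} \<times> permutations_of_set C)"
    define h :: "nat set \<times> (nat \<Rightarrow> nat list) \<times> nat list \<Rightarrow> (nat \<Rightarrow> nat list)"
      where "h = (\<lambda>(C, P, L). P(r := L))"
    have img: "{ch. pforest V R ch} = h ` D"
    proof
      show "{ch. pforest V R ch} \<subseteq> h ` D"
      proof
        fix ch assume "ch \<in> {ch. pforest V R ch}"
        then have pf: "pforest V R ch" by simp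
        have s1: "set (ch r) \<subseteq> M" using pf_sub[OF pf] M_def by blast
        have s2: "ch r \<in> permutations_of_set (set (ch r))"
          using pf by (simp add: permutations_of_set_def pforest_def)
        have "(set (ch r), ch(r := []), ch r) \<in> D"
          unfolding D_def using fwd[OF pf r] s1 s2 by simp
        moreover have "ch = h (set (ch r), ch(r := []), ch r)" unfolding h_def by simp
        ultimately show "ch \<in> h ` D" by blast
      qed
    next
      show "h ` D \<subseteq> {ch. pforest V R ch}"
      proof
        fix ch assume "ch \<in> h ` D"
        then obtain C P L where "C \<subseteq> M" "pforest (V - {r}) (R - {r} \<union> C) P" "distinct L" "set L = C"
          and ch: "ch = P(r := L)"
          unfolding D_def h_def by (auto simp: permutations_of_set_def)
        then show "ch \<in> {ch. pforest V R ch}"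
          using bwd[of V r R C P L] r less.prems M_def by simp
      qed
    qed
    have inj: "inj_on h D"
    proof (rule inj_onI)
      fix a b assume a: "a \<in> D" and b: "b \<in> D" and e: "h a = h b"
      obtain C1 P1 L1 where a': "a = (C1, P1, L1)" by (cases a) auto
      obtain C2 P2 L2 where b': "b = (C2, P2, L2)" by (cases b) auto
      have e': "P1(r := L1) = P2(r := L2)" using e a' b' unfolding h_def by simp
      have L: "L1 = L2" using fun_cong[OF e', of r] by simp
      have C: "C1 = set L1" "C2 = set L2" using a b a' b' unfolding D_def by (auto simp: permutations_of_set_def)
      have "P1 r = []" "P2 r = []" using a b a' b' unfolding D_def by (auto simp: pforest_def)
      then have "P1 = P2" using e' by (auto simp: fun_eq_iff) (metis fun_upd_other)
      then show "a = b" using a' b' L C by simp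
    qed
    have finM: "finite M" using less.prems M_def by simp
    have finP: "\<And>C. finite {P. pforest (V - {r}) (R - {r} \<union> C) P}"
      using finite_pforests less.prems by simp
    have "FF x t V R = sum (wt x t V) (h ` D)" unfolding FF_def img ..
    also have "\<dots> = sum (wt x t V \<circ> h) D" using sum.reindex[OF inj] .
    also have "\<dots> = (\<Sum>C\<in>Pow M. \<Sum>p\<in>{P. pforest (V - {r}) (R - {r} \<union> C) P} \<times> permutations_of_set C.
                        wt x t V ((fst p)(r := snd p)))"
      unfolding D_def using finM finP
      by (subst sum.Sigma) (auto simp: h_def split_beta)
    also have "\<dots> = (\<Sum>C\<in>Pow M. \<Sum>P\<in>{P. pforest (V - {r}) (R - {r} \<union> C) P}. \<Sum>L\<in>permutations_of_set C.
                        wt x t V (P(r := L)))"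
      by (simp add: sum.cartesian_product split_beta)
    also have "\<dots> = (\<Sum>C\<in>Pow M. \<Sum>P\<in>{P. pforest (V - {r}) (R - {r} \<union> C) P}. \<Sum>L\<in>permutations_of_set C.
                        wl t (x r) (beta P) L * wt x t (V - {r}) P)"
    proof (intro sum.cong refl)
      fix C P L assume "C \<in> Pow M" "P \<in> {P. pforest (V - {r}) (R - {r} \<union> C) P}" "L \<in> permutations_of_set C"
      then show "wt x t V (P(r := L)) = wl t (x r) (beta P) L * wt x t (V - {r}) P"
        using wt_step[of V r R C P L x t] r less.prems M_def by (auto simp: permutations_of_set_def)
    qed
    also have "\<dots> = (\<Sum>C\<in>Pow M. \<Sum>P\<in>{P. pforest (V - {r}) (R - {r} \<union> C) P}. RF t (x r) (card C) * wt x t (V - {r}) P)"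
    proof (intro sum.cong refl)
      fix C P assume C: "C \<in> Pow M" and P: "P \<in> {P. pforest (V - {r}) (R - {r} \<union> C) P}"
      have inj: "inj_on (beta P) C"
        using beta_inj_roots[of "V - {r}" "R - {r} \<union> C" P] P less.prems inj_on_subset by blast
      have "finite C" using C finM finite_subset by auto
      then show "(\<Sum>L\<in>permutations_of_set C. wl t (x r) (beta P) L * wt x t (V - {r}) P) = RF t (x r) (card C) * wt x t (V - {r}) P"
        using sum_perms[OF _ inj, of t "x r"] by (simp add: sum_distrib_right[symmetric])
    qed
    also have "\<dots> = (\<Sum>C\<in>Pow M. RF t (x r) (card C) * FF x t (V - {r}) (R - {r} \<union> C))"
      unfolding FF_def by (simp add: sum_distrib_left)
    also have "\<dots> = (\<Sum>C\<in>Pow M. RF t (x r) (card C) * Fc x t (V - {r}) (R - {r} \<union> C))"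
    proof (intro sum.cong refl)
      fix C assume "C \<in> Pow M"
      then have "R - {r} \<union> C \<subseteq> V - {r}" using less.prems M_def r by auto
      moreover have "card (V - {r}) < card V" using less.prems r by (meson card_Diff1_less subsetD)
      ultimately show "RF t (x r) (card C) * FF x t (V - {r}) (R - {r} \<union> C) = RF t (x r) (card C) * Fc x t (V - {r}) (R - {r} \<union> C)"
        using less.hyps less.prems by simp
    qed
    also have "\<dots> = Fc x t V R" unfolding M_def using Fc_step[OF less.prems r] .
    finally show ?thesis .
  qed
qed

lemma plane_trees_eq: "plane_trees n r = {ch. pforest {1..n} {r} ch}"
proof (rule set_eqI)
  fix ch
  show "ch \<in> plane_trees n r \<longleftrightarrow> ch \<in> {ch. pforest {1..n} {r} ch}"
    unfolding plane_trees_def is_plane_tree_def pforest_def by auto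
qed

lemma summand_eq:
  "t ^ eld_total n T * (\<Prod>i=1..n. x i ^ young_v T i) = wt x t {1..n} T"
proof -
  have "t ^ eld_total n T = (\<Prod>i=1..n. t ^ eld_v T i)"
    unfolding eld_total_def by (rule power_sum)
  then have "t ^ eld_total n T * (\<Prod>i=1..n. x i ^ young_v T i) = (\<Prod>i=1..n. x i ^ young_v T i * t ^ eld_v T i)"
    by (simp add: prod.distrib mult.commute)
  also have "\<dots> = wt x t {1..n} T"
    unfolding wt_def wl_def young_v_def deg_v_def eld_v_def eldL_def ..
  finally show ?thesis .
qed

lemma key:
  fixes x :: "nat \<Rightarrow> 'a::field"
  assumes "1 \<le> r" "r \<le> n" "2 \<le> n" "x r \<noteq> 0"
  shows "inverse (x r) * (\<Sum>T\<in>plane_trees n r. t ^ eld_total n T * (\<Prod>i=1..n. x i ^ young_v T i))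
       = RF t (sum x {1..n} + t) (n - 2)"
proof -
  have "(\<Sum>T\<in>plane_trees n r. t ^ eld_total n T * (\<Prod>i=1..n. x i ^ young_v T i)) = FF x t {1..n} {r}"
    unfolding FF_def plane_trees_eq summand_eq ..
  also have "\<dots> = Fc x t {1..n} {r}" using assms by (intro FF_Fc) auto
  also have "\<dots> = x r * RF t (sum x {1..n} + t) (n - 2)"
  proof -
    have "\<not> {1..n} \<subseteq> {r}" using assms
      by (metis atLeastAtMost_iff le_trans nat_1_add_1 not_one_le_zero one_le_numeral singletonD subsetD Suc_1 le_antisym not_less_eq_eq)
    moreover have "card ({1..n} - {r}) = n - 1" using assms by simp
    moreover have "n - 1 - 1 = n - 2" by simp
    ultimately show ?thesis unfolding Fc_def by (simp only: if_False sum.insert_remove) simp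
  qed
  finally show ?thesis using assms by simp
qed

theorem corollary4p7:
  fixes x :: "nat \<Rightarrow> 'a::field" and t :: 'a and n r s :: nat
  assumes "1 \<le> r" and "r < s" and "s \<le> n"
    and "x r \<noteq> 0" and "x s \<noteq> 0"
  shows "inverse (x r) * (\<Sum>T\<in>plane_trees n r.
            t ^ eld_total n T * (\<Prod>i=1..n. x i ^ young_v T i))
       = inverse (x s) * (\<Sum>T\<in>plane_trees n s.
            t ^ eld_total n T * (\<Prod>i=1..n. x i ^ young_v T i))"
  using key[of r n x t] key[of s n x t] assms by simp

end
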